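(* For every integer $N$ there exists a graph $G$ with $\pi_T(G)-\pi_{T_w}(G)\ge N$; that is, the difference between $\pi_{T_w}$ and $\pi_T$ can be arbitrarily large.
   Context: Graphs are finite and simple. A sequence is nonrepetitive if no block of consecutive terms has the form $r_1\dots r_nr_1\dots r_n$ with $n\ge1$. A weak total Thue colouring of $G$ is a colouring of $V(G)\cup E(G)$ such that for every path $v_1,e_1,v_2,\dots,e_{k-1},v_k$ the sequence of colours of $v_1,e_1,\dots,v_k$ is nonrepetitive; $\pi_{T_w}(G)$ is the minimum number of colours in such a colouring. A (strong) total Thue colouring is a weak total Thue colouring in which additionally the colour sequence of the vertices of every path and the colour sequence of the edges of every path are nonrepetitive; $\pi_T(G)$ is the minimum number of colours in such a colouring. *)

theory Defs
  imports Main
begin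

definition simple_graph :: "'a set \<Rightarrow> 'a set set \<Rightarrow> bool" where
  "simple_graph V E \<longleftrightarrow> finite V \<and>
     (\<forall>e\<in>E. \<exists>u v. u \<noteq> v \<and> u \<in> V \<and> v \<in> V \<and> e = {u, v})"

definition is_path :: "'a set \<Rightarrow> 'a set set \<Rightarrow> 'a list \<Rightarrow> bool" where
  "is_path V E ps \<longleftrightarrow> ps \<noteq> [] \<and> distinct ps \<and> set ps \<subseteq> V \<and>
     (\<forall>i. Suc i < length ps \<longrightarrow> {ps ! i, ps ! Suc i} \<in> E)"

definition path_edges :: "'a list \<Rightarrow> 'a set list" where
  "path_edges ps = map (\<lambda>i. {ps ! i, ps ! Suc i}) [0..<length ps - 1]"

fun total_seq :: "('a \<Rightarrow> 'c) \<Rightarrow> ('a set \<Rightarrow> 'c) \<Rightarrow> 'a list \<Rightarrow> 'c list" where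
  "total_seq f g [] = []"
| "total_seq f g [v] = [f v]"
| "total_seq f g (u # v # vs) = f u # g {u, v} # total_seq f g (v # vs)"

definition nonrepetitive :: "'c list \<Rightarrow> bool" where
  "nonrepetitive s \<longleftrightarrow> \<not> (\<exists>xs r zs. r \<noteq> [] \<and> s = xs @ r @ r @ zs)"

definition weak_total_thue :: "'a set \<Rightarrow> 'a set set \<Rightarrow> nat \<Rightarrow> ('a \<Rightarrow> nat) \<Rightarrow> ('a set \<Rightarrow> nat) \<Rightarrow> bool" where
  "weak_total_thue V E k f g \<longleftrightarrow> (\<forall>v\<in>V. f v < k) \<and> (\<forall>e\<in>E. g e < k) \<and>
     (\<forall>ps. is_path V E ps \<longrightarrow> nonrepetitive (total_seq f g ps))"

definition total_thue :: "'a set \<Rightarrow> 'a set set \<Rightarrow> nat \<Rightarrow> ('a \<Rightarrow> nat) \<Rightarrow> ('a set \<Rightarrow> nat) \<Rightarrow> bool" where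
  "total_thue V E k f g \<longleftrightarrow> weak_total_thue V E k f g \<and>
     (\<forall>ps. is_path V E ps \<longrightarrow> nonrepetitive (map f ps) \<and> nonrepetitive (map g (path_edges ps)))"

definition pi_Tw :: "'a set \<Rightarrow> 'a set set \<Rightarrow> nat" where
  "pi_Tw V E = (LEAST k. \<exists>f g. weak_total_thue V E k f g)"

definition pi_T :: "'a set \<Rightarrow> 'a set set \<Rightarrow> nat" where
  "pi_T V E = (LEAST k. \<exists>f g. total_thue V E k f g)"

end

theory Submission
  imports Defs
begin
definition SV :: "nat \<Rightarrow> nat set" where "SV n = {0..n}"
definition SE :: "nat \<Rightarrow> nat set set" where "SE n = (\<lambda>i. {0,i}) ` {1..n}"
lemma sg: "simple_graph (SV n) (SE n)"
  unfolding simple_graph_def SV_def SE_def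
proof (intro conjI ballI)
  fix e assume "e \<in> (\<lambda>i. {0::nat, i}) ` {1..n}"
  then obtain i where "i \<in> {1..n}" "e = {0,i}" by auto
  then show "\<exists>u v. u \<noteq> v \<and> u \<in> {0..n} \<and> v \<in> {0..n} \<and> e = {u, v}"
    by (intro exI[of _ 0] exI[of _ i]) auto
qed simp
lemma edge_char: "{a,b} \<in> SE n \<Longrightarrow> (a = 0 \<and> b \<in> {1..n}) \<or> (b = 0 \<and> a \<in> {1..n})"
  unfolding SE_def by (auto simp: doubleton_eq_iff)

lemma path_char:
  assumes "is_path (SV n) (SE n) ps"
  shows "(\<exists>v. ps = [v]) \<or> (\<exists>i\<in>{1..n}. ps = [i,0] \<or> ps = [0,i])
     \<or> (\<exists>i\<in>{1..n}. \<exists>j\<in>{1..n}. i \<noteq> j \<and> ps = [i,0,j])"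
proof -
  have ne: "ps \<noteq> []" and d: "distinct ps" and ed: "\<And>i. Suc i < length ps \<Longrightarrow> {ps ! i, ps ! Suc i} \<in> SE n"
    using assms unfolding is_path_def by auto
  show ?thesis
  proof (cases ps)
    case Nil then show ?thesis using ne by simp
  next
    case (Cons a rest)
    show ?thesis
    proof (cases rest)
      case Nil then show ?thesis using Cons by simp
    next
      case (Cons b rest2)
      have ab: "{a,b} \<in> SE n" using ed[of 0] \<open>ps = a # rest\<close> Cons by simp
      show ?thesis
      proof (cases rest2)
        case Nil then show ?thesis using edge_char[OF ab] \<open>ps = a # rest\<close> Cons by auto
      next
        case (Cons c rest3)
        have bc: "{b,c} \<in> SE n" using ed[of 1] \<open>ps = a # rest\<close> \<open>rest = b # rest2\<close> Cons by simp
        have dd: "distinct (a#b#c#rest3)" using d \<open>ps = a # rest\<close> \<open>rest = b # rest2\<close> Cons by simp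
        have b0: "b = 0" using edge_char[OF ab] edge_char[OF bc] dd by auto
        have r3: "rest3 = []"
        proof (rule ccontr)
          assume "rest3 \<noteq> []"
          then obtain x r4 where "rest3 = x # r4" by (cases rest3) auto
          then have "{c,x} \<in> SE n" using ed[of 2] \<open>ps = a # rest\<close> \<open>rest = b # rest2\<close> Cons
            by (simp add: numeral_2_eq_2)
          then show False using edge_char[of c x n] dd b0 \<open>rest3 = x # r4\<close> by auto
        qed
        show ?thesis using edge_char[OF ab] edge_char[OF bc] dd b0 r3 \<open>ps = a # rest\<close> \<open>rest = b # rest2\<close> Cons
          by auto
      qed
    qed
  qed
qed

lemma distinct_nonrep: "distinct s \<Longrightarrow> nonrepetitive s"
  unfolding nonrepetitive_def by (auto simp: neq_Nil_conv)

lemma nonrep5: "a \<noteq> b \<Longrightarrow> b \<noteq> c \<Longrightarrow> a \<noteq> c \<Longrightarrow> nonrepetitive [a,b,c,b,a]"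
  unfolding nonrepetitive_def
  by (auto simp: Cons_eq_append_conv append_eq_Cons_conv)

lemma nonrep3: "a \<noteq> b \<Longrightarrow> b \<noteq> c \<Longrightarrow> a \<noteq> c \<Longrightarrow> nonrepetitive [a,b,c]"
  by (rule distinct_nonrep) simp

lemma nonrep1: "nonrepetitive [a]"
  by (rule distinct_nonrep) simp

lemma weak3: "weak_total_thue (SV n) (SE n) 3 (\<lambda>v. if v = 0 then 0 else 1::nat) (\<lambda>e. 2::nat)"
  unfolding weak_total_thue_def
proof (intro conjI ballI allI impI)
  fix ps assume "is_path (SV n) (SE n) ps"
  from path_char[OF this] show "nonrepetitive (total_seq (\<lambda>v. if v = 0 then 0 else 1::nat) (\<lambda>e. 2::nat) ps)"
    by (auto simp: nonrep1 nonrep3 nonrep5)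
qed auto

lemma sum2: "(i::nat) \<noteq> 0 \<Longrightarrow> \<Sum>{i,0} = i" "(i::nat) \<noteq> 0 \<Longrightarrow> \<Sum>{0,i} = i"
  by simp_all

lemma pe2: "path_edges [a,b] = [{a,b}]"
  by (simp add: path_edges_def)
lemma pe3: "path_edges [a,b,c] = [{a,b},{b,c}]"
  by (simp add: path_edges_def numeral_2_eq_2 upt_rec)

lemma strong_exists: "total_thue (SV n) (SE n) (2*n+2) (\<lambda>v. v) (\<lambda>e. n + 1 + \<Sum>e)"
  unfolding total_thue_def weak_total_thue_def
proof (intro conjI ballI allI impI)
  fix ps assume p: "is_path (SV n) (SE n) ps"
  have "distinct (total_seq (\<lambda>v. v) (\<lambda>e. n + 1 + \<Sum>e) ps) \<and> distinct (map (\<lambda>v. v) ps)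
     \<and> distinct (map (\<lambda>e. n + 1 + \<Sum>e) (path_edges ps))"
    using path_char[OF p]
  proof (elim disjE exE bexE conjE)
    fix v assume "ps = [v]" then show ?thesis by (simp add: path_edges_def)
  next
    fix i assume "i \<in> {1..n}" "ps = [i,0]"
    then show ?thesis by (auto simp: pe2 sum2)
  next
    fix i assume "i \<in> {1..n}" "ps = [0,i]"
    then show ?thesis by (auto simp: pe2 sum2)
  next
    fix i j assume "i \<in> {1..n}" "j \<in> {1..n}" "i \<noteq> j" "ps = [i,0,j]"
    then show ?thesis by (simp add: pe3 sum2)
  qed
  then show "nonrepetitive (total_seq (\<lambda>v. v) (\<lambda>e. n + 1 + \<Sum>e) ps)"
    and "nonrepetitive (map (\<lambda>v. v) ps)" and "nonrepetitive (map (\<lambda>e. n + 1 + \<Sum>e) (path_edges ps))"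
    by (simp_all add: distinct_nonrep)
next
  fix v assume "v \<in> SV n" then show "v < 2*n+2" by (simp add: SV_def)
next
  fix e assume "e \<in> SE n"
  then obtain i where "i \<in> {1..n}" "e = {0,i}" by (auto simp: SE_def)
  then show "n + 1 + \<Sum>e < 2*n+2" by (simp add: sum2)
qed

lemma strong_lower:
  assumes "total_thue (SV n) (SE n) k f g"
  shows "n \<le> k"
proof -
  have inj: "inj_on g (SE n)"
  proof (rule inj_onI)
    fix x y assume x: "x \<in> SE n" and y: "y \<in> SE n" and eq: "g x = g y"
    show "x = y"
    proof (rule ccontr)
      assume ne: "x \<noteq> y"
      obtain i where i: "i \<in> {1..n}" "x = {0,i}" using x by (auto simp: SE_def)
      obtain j where j: "j \<in> {1..n}" "y = {0,j}" using y by (auto simp: SE_def)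
      have ij: "i \<noteq> j" using ne i j by auto
      have "is_path (SV n) (SE n) [i,0,j]"
        using i j ij unfolding is_path_def SV_def SE_def
        by (auto simp: less_Suc_eq nth_Cons' insert_commute)
      then have "nonrepetitive (map g (path_edges [i,0,j]))"
        using assms unfolding total_thue_def by blast
      then have "nonrepetitive [g {i,0}, g {0,j}]"
        by (simp add: path_edges_def numeral_2_eq_2 upt_rec)
      moreover have "g {i,0} = g {0,j}" using eq i j by (simp add: insert_commute)
      ultimately show False unfolding nonrepetitive_def
        by (metis append_Cons append_Nil list.distinct(1))
    qed
  qed
  have sub: "g ` SE n \<subseteq> {..<k}" using assms unfolding total_thue_def weak_total_thue_def by auto
  have "card (SE n) = n"
    unfolding SE_def by (subst card_image) (auto simp: inj_on_def doubleton_eq_iff)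
  then have "n = card (g ` SE n)" using card_image[OF inj] by simp
  also have "\<dots> \<le> card {..<k}" by (rule card_mono[OF _ sub]) simp
  finally show ?thesis by simp
qed

theorem mainTheorem4:
  fixes N :: int
  shows "\<exists>(V :: nat set) (E :: nat set set).
           simple_graph V E \<and> int (pi_T V E) - int (pi_Tw V E) \<ge> N"
proof -
  define n where "n = nat N + 3"
  have "pi_Tw (SV n) (SE n) \<le> 3" unfolding pi_Tw_def
    by (rule Least_le) (use weak3 in blast)
  moreover have "total_thue (SV n) (SE n) (pi_T (SV n) (SE n)) (SOME f. \<exists>g. total_thue (SV n) (SE n) (pi_T (SV n) (SE n)) f g)
       (SOME g. total_thue (SV n) (SE n) (pi_T (SV n) (SE n)) (SOME f. \<exists>g. total_thue (SV n) (SE n) (pi_T (SV n) (SE n)) f g) g)"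
  proof -
    have "\<exists>f g. total_thue (SV n) (SE n) (pi_T (SV n) (SE n)) f g"
      unfolding pi_T_def by (rule LeastI_ex) (use strong_exists in blast)
    then show ?thesis by (metis (mono_tags, lifting) someI_ex)
  qed
  then have "n \<le> pi_T (SV n) (SE n)" by (rule strong_lower)
  ultimately show ?thesis using sg[of n] unfolding n_def
    by (intro exI[of _ "SV (nat N + 3)"] exI[of _ "SE (nat N + 3)"]) auto
qed

end
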